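(* Let $R$ be a commutative ring with $2=0$, and let $(A,\mathcal{I},\Omega)$ be an axial decomposition algebra over $R$ (with $A$ commutative) with respect to a fusion law $(X,* )$ equipped with a $\mathbb{Z}/2\mathbb{Z}$-grading $\xi$, such that all axes $a_i$ ($i\in\mathcal{I}$) are idempotents. Then every axis is contained in the zero-core $\bigcap_{i\in\mathcal{I}} A^i_{\xi^{-1}(0)}$. In particular, if $A$ is generated (as an algebra) by its axes, then all the $\mathbb{Z}/2\mathbb{Z}$-decompositions are trivial, i.e. $A^i_{\xi^{-1}(1)}=0$ for all $i\in\mathcal{I}$.
   Context: A fusion law is a pair $(X,* )$ with $*\colon X\times X\to 2^X$; $e\in X$ is a unit if $e*x\subseteq\{x\}$ and $x*e\subseteq\{x\}$ for all $x$. A $\Phi$-decomposition of an $R$-algebra $A$ is a direct sum $A=\bigoplus_{x\in X}A_x$ of $R$-modules with $A_xA_y\subseteq A_{x*y}$, where $A_Y=\bigoplus_{y\in Y}A_y$ (so $A_\emptyset=0$). A $\Phi$-decomposition algebra $(A,\mathcal{I},\Omega)$ is an algebra $A$ with a family $\Omega=((A^i_x)_{x\in X})_{i\in\mathcal{I}}$ of $\Phi$-decompositions. Given a distinguished unit $e\in X$ and parameters $\lambda_x\in R$, it is axial if for each $i$ there is a nonzero $a_i\in A^i_e$ (an axis) with $a_ib=\lambda_xb$ for all $x\in X$ and $b\in A^i_x$. A $\mathbb{Z}/2\mathbb{Z}$-grading of $(X,* )$ is a map $\xi\colon X\to\mathbb{Z}/2\mathbb{Z}$ with $\xi(x*y)\subseteq\{\xi(x)+\xi(y)\}$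 for all $x,y$. All algebras are commutative, not necessarily associative or unital. *)

theory Defs
  imports Main "HOL.Modules" "HOL-Library.Z2"
begin

definition comm_algebra :: "('r::comm_ring_1 \<Rightarrow> 'a::ab_group_add \<Rightarrow> 'a) \<Rightarrow> ('a \<Rightarrow> 'a \<Rightarrow> 'a) \<Rightarrow> bool" where
  "comm_algebra smul mul \<longleftrightarrow> module smul
     \<and> (\<forall>u v w. mul (u + v) w = mul u w + mul v w)
     \<and> (\<forall>r u v. mul (smul r u) v = smul r (mul u v))
     \<and> (\<forall>u v. mul u v = mul v u)"

text \<open>A_Y = sum of the submodules A_y, y in Y (so A_{} = 0).\<close>
definition sum_part :: "('x \<Rightarrow> 'a::ab_group_add set) \<Rightarrow> 'x set \<Rightarrow> 'a set" where
  "sum_part D Y = {v. \<exists>S f. finite S \<and> S \<subseteq> Y \<and> (\<forall>y\<in>S. f y \<in> D y) \<and> v = sum f S}"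

text \<open>Internal direct sum decomposition of the module into submodules D x, x ranging over X
  (here the whole type 'x).\<close>
definition direct_sum_decomp :: "('r::comm_ring_1 \<Rightarrow> 'a::ab_group_add \<Rightarrow> 'a) \<Rightarrow> ('x \<Rightarrow> 'a set) \<Rightarrow> bool" where
  "direct_sum_decomp smul D \<longleftrightarrow> (\<forall>x. module.subspace smul (D x))
     \<and> (\<forall>v. \<exists>!f. finite {x. f x \<noteq> 0} \<and> (\<forall>x. f x \<in> D x) \<and> v = sum f {x. f x \<noteq> 0})"

definition fusion_decomp :: "('r::comm_ring_1 \<Rightarrow> 'a::ab_group_add \<Rightarrow> 'a) \<Rightarrow> ('a \<Rightarrow> 'a \<Rightarrow> 'a)
    \<Rightarrow> ('x \<Rightarrow> 'x \<Rightarrow> 'x set) \<Rightarrow> ('x \<Rightarrow> 'a set) \<Rightarrow> bool" where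
  "fusion_decomp smul mul star D \<longleftrightarrow> direct_sum_decomp smul D
     \<and> (\<forall>x y a b. a \<in> D x \<longrightarrow> b \<in> D y \<longrightarrow> mul a b \<in> sum_part D (star x y))"

definition fusion_unit :: "('x \<Rightarrow> 'x \<Rightarrow> 'x set) \<Rightarrow> 'x \<Rightarrow> bool" where
  "fusion_unit star e \<longleftrightarrow> (\<forall>x. star e x \<subseteq> {x} \<and> star x e \<subseteq> {x})"

definition Z2_grading :: "('x \<Rightarrow> 'x \<Rightarrow> 'x set) \<Rightarrow> ('x \<Rightarrow> bit) \<Rightarrow> bool" where
  "Z2_grading star \<xi> \<longleftrightarrow> (\<forall>x y. \<xi> ` star x y \<subseteq> {\<xi> x + \<xi> y})"

definition is_axis :: "('r::comm_ring_1 \<Rightarrow> 'a::ab_group_add \<Rightarrow> 'a) \<Rightarrow> ('a \<Rightarrow> 'a \<Rightarrow> 'a)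
    \<Rightarrow> 'x \<Rightarrow> ('x \<Rightarrow> 'r) \<Rightarrow> ('x \<Rightarrow> 'a set) \<Rightarrow> 'a \<Rightarrow> bool" where
  "is_axis smul mul e lam D a \<longleftrightarrow> a \<noteq> 0 \<and> a \<in> D e
     \<and> (\<forall>x b. b \<in> D x \<longrightarrow> mul a b = smul (lam x) b)"

definition subalgebra :: "('r::comm_ring_1 \<Rightarrow> 'a::ab_group_add \<Rightarrow> 'a) \<Rightarrow> ('a \<Rightarrow> 'a \<Rightarrow> 'a) \<Rightarrow> 'a set \<Rightarrow> bool" where
  "subalgebra smul mul B \<longleftrightarrow> module.subspace smul B \<and> (\<forall>u\<in>B. \<forall>v\<in>B. mul u v \<in> B)"

definition generated_by :: "('r::comm_ring_1 \<Rightarrow> 'a::ab_group_add \<Rightarrow> 'a) \<Rightarrow> ('a \<Rightarrow> 'a \<Rightarrow> 'a) \<Rightarrow> 'a set \<Rightarrow> bool" where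
  "generated_by smul mul G \<longleftrightarrow> (\<forall>B. subalgebra smul mul B \<longrightarrow> G \<subseteq> B \<longrightarrow> B = UNIV)"

end

theory Submission
  imports Defs
begin

lemma sp_zero: "0 \<in> sum_part D Y"
  unfolding sum_part_def by (rule CollectI, rule exI[of _ "{}"], auto)

lemma sp_single: "x \<in> Y \<Longrightarrow> a \<in> D x \<Longrightarrow> a \<in> sum_part D Y"
  unfolding sum_part_def
  by (rule CollectI, rule exI[of _ "{x}"], rule exI[of _ "\<lambda>_. a"], auto)

lemma sp_mono: "Y \<subseteq> Z \<Longrightarrow> v \<in> sum_part D Y \<Longrightarrow> v \<in> sum_part D Z"
  unfolding sum_part_def by blast

lemma sp_add:
  assumes z: "\<forall>x. 0 \<in> D x" and ad: "\<forall>x. \<forall>a\<in>D x. \<forall>b\<in>D x. a + b \<in> D x"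
    and u: "u \<in> sum_part D Y" and v: "v \<in> sum_part D Y"
  shows "u + v \<in> sum_part D Y"
proof -
  obtain S f where S: "finite S" "S \<subseteq> Y" "\<forall>y\<in>S. f y \<in> D y" "u = sum f S"
    using u unfolding sum_part_def by blast
  obtain T g where T: "finite T" "T \<subseteq> Y" "\<forall>y\<in>T. g y \<in> D y" "v = sum g T"
    using v unfolding sum_part_def by blast
  define h where "h y = (if y \<in> S then f y else 0) + (if y \<in> T then g y else 0)" for y
  have 1: "sum (\<lambda>y. if y \<in> S then f y else 0) (S \<union> T) = sum f S"
    using S(1) T(1) by (simp add: sum.If_cases Int_absorb1)
  have 2: "sum (\<lambda>y. if y \<in> T then g y else 0) (S \<union> T) = sum g T"
    using S(1) T(1) by (simp add: sum.If_cases Int_absorb1)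
  have "sum h (S \<union> T) = u + v"
    unfolding h_def sum.distrib 1 2 using S T by simp
  moreover have "\<forall>y\<in>S \<union> T. h y \<in> D y"
    using S(3) T(3) z ad unfolding h_def by auto
  ultimately show ?thesis unfolding sum_part_def using S T
    by (intro CollectI exI[of _ "S \<union> T"] exI[of _ h]) auto
qed

lemma sp_sum:
  assumes z: "\<forall>x. 0 \<in> D x" and ad: "\<forall>x. \<forall>a\<in>D x. \<forall>b\<in>D x. a + b \<in> D x"
  shows "(\<forall>i\<in>I. g i \<in> sum_part D Y) \<Longrightarrow> sum g I \<in> sum_part D Y"
proof (induction I rule: infinite_finite_induct)
  case (infinite A) then show ?case by (simp add: sp_zero)
next
  case empty then show ?case by (simp add: sp_zero)
next
  case (insert x F) then show ?case by (simp add: sp_add[OF z ad])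
qed

lemma mul_zero_left:
  fixes mul :: "'a::ab_group_add \<Rightarrow> 'b \<Rightarrow> 'a"
  assumes "\<forall>u v w. mul (u + v) w = mul u w + mul v w"
  shows "mul 0 w = (0::'a::ab_group_add)"
proof -
  have "mul (0 + 0) w = mul 0 w + mul 0 w" using assms by blast
  then have "mul 0 w = mul 0 w + mul 0 w" by simp
  then show ?thesis by (metis add_cancel_right_right)
qed

lemma mul_sum_left:
  fixes mul :: "'a::ab_group_add \<Rightarrow> 'b \<Rightarrow> 'a"
  assumes "\<forall>u v w. mul (u + v) w = mul u w + mul v w"
  shows "mul (sum f S) w = (\<Sum>s\<in>S. mul (f s) w :: 'a::ab_group_add)"
  by (induction S rule: infinite_finite_induct) (auto simp: mul_zero_left[OF assms] assms)

lemma sp_rep: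
  assumes v: "v \<in> sum_part D Y" and z: "\<forall>x. 0 \<in> D x"
  shows "\<exists>f. finite {x. f x \<noteq> 0} \<and> (\<forall>x. f x \<in> D x) \<and> v = sum f {x. f x \<noteq> 0} \<and> {x. f x \<noteq> 0} \<subseteq> Y"
proof -
  obtain S f where S: "finite S" "S \<subseteq> Y" "\<forall>y\<in>S. f y \<in> D y" "v = sum f S"
    using v unfolding sum_part_def by blast
  define f' where "f' y = (if y \<in> S then f y else 0)" for y
  have sub: "{x. f' x \<noteq> 0} \<subseteq> S" unfolding f'_def by auto
  have "sum f' {x. f' x \<noteq> 0} = sum f' S"
    by (rule sum.mono_neutral_left[OF S(1) sub]) auto
  also have "\<dots> = sum f S" unfolding f'_def by simp
  finally show ?thesis using sub S z finite_subset[OF sub S(1)]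
    by (intro exI[of _ f']) (auto simp: f'_def)
qed

theorem proposition4p1:
  fixes smul :: "'r::comm_ring_1 \<Rightarrow> 'a::ab_group_add \<Rightarrow> 'a"
    and mul :: "'a \<Rightarrow> 'a \<Rightarrow> 'a"
    and star :: "'x \<Rightarrow> 'x \<Rightarrow> 'x set"
    and e :: 'x and lam :: "'x \<Rightarrow> 'r"
    and \<Omega> :: "'i \<Rightarrow> 'x \<Rightarrow> 'a set"
    and ax :: "'i \<Rightarrow> 'a"
    and \<xi> :: "'x \<Rightarrow> bit"
  assumes char2: "(2::'r) = 0"
    and alg: "comm_algebra smul mul"
    and decomp: "\<forall>i. fusion_decomp smul mul star (\<Omega> i)"
    and unit: "fusion_unit star e"
    and axes: "\<forall>i. is_axis smul mul e lam (\<Omega> i) (ax i)"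
    and idem: "\<forall>i. mul (ax i) (ax i) = ax i"
    and grading: "Z2_grading star \<xi>"
  shows "(\<forall>i j. ax i \<in> sum_part (\<Omega> j) {x. \<xi> x = 0})
    \<and> (generated_by smul mul (range ax) \<longrightarrow> (\<forall>i. sum_part (\<Omega> i) {x. \<xi> x = 1} = {0}))"
proof -
  have md: "module smul" and ladd: "\<forall>u v w. mul (u + v) w = mul u w + mul v w"
    and lsc: "\<forall>r u v. mul (smul r u) v = smul r (mul u v)" and comm: "\<forall>u v. mul u v = mul v u"
    using alg unfolding comm_algebra_def by auto
  have radd: "\<forall>u v w. mul w (u + v) = mul w u + mul w v" using ladd comm by metis
  have sub: "\<And>j x. module.subspace smul (\<Omega> j x)"
    using decomp unfolding fusion_decomp_def direct_sum_decomp_def by blast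
  have z: "\<And>j. \<forall>x. 0 \<in> \<Omega> j x" using sub md module.subspace_0 by metis
  have ad: "\<And>j. \<forall>x. \<forall>a\<in>\<Omega> j x. \<forall>b\<in>\<Omega> j x. a + b \<in> \<Omega> j x"
    using sub md module.subspace_add by metis
  have prodD: "\<And>j x y a b. a \<in> \<Omega> j x \<Longrightarrow> b \<in> \<Omega> j y \<Longrightarrow> mul a b \<in> sum_part (\<Omega> j) (star x y)"
    using decomp unfolding fusion_decomp_def by blast
  have twice: "\<And>w::'a. w + w = 0"
  proof -
    fix w
    have "w + w = smul 1 w + smul 1 w" using md by (simp add: module.scale_one)
    also have "\<dots> = smul (1 + 1) w" using md by (simp only: module.scale_left_distrib)
    also have "\<dots> = smul 0 w" using char2 by (simp only: one_add_one)
    also have "\<dots> = 0" using md by (simp add: module.scale_zero_left)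
    finally show "w + w = 0" .
  qed
  have prod: "mul u v \<in> sum_part (\<Omega> j) {x. \<xi> x = c + d}"
    if u: "u \<in> sum_part (\<Omega> j) {x. \<xi> x = c}" and v: "v \<in> sum_part (\<Omega> j) {x. \<xi> x = d}"
    for j u v c d
  proof -
    obtain S f where S: "finite S" "S \<subseteq> {x. \<xi> x = c}" "\<forall>y\<in>S. f y \<in> \<Omega> j y" "u = sum f S"
      using u unfolding sum_part_def by blast
    obtain T g where T: "finite T" "T \<subseteq> {x. \<xi> x = d}" "\<forall>y\<in>T. g y \<in> \<Omega> j y" "v = sum g T"
      using v unfolding sum_part_def by blast
    have "mul u v = (\<Sum>s\<in>S. \<Sum>t\<in>T. mul (f s) (g t))"
      unfolding S(4) T(4) mul_sum_left[OF ladd]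
      by (subst comm, subst mul_sum_left[OF ladd], subst comm, rule refl)
    also have "\<dots> \<in> sum_part (\<Omega> j) {x. \<xi> x = c + d}"
    proof (rule sp_sum[OF z ad], intro ballI, rule sp_sum[OF z ad], intro ballI)
      fix s t assume st: "s \<in> S" "t \<in> T"
      have "star s t \<subseteq> {x. \<xi> x = c + d}"
        using grading st S(2) T(2) unfolding Z2_grading_def by blast
      then show "mul (f s) (g t) \<in> sum_part (\<Omega> j) {x. \<xi> x = c + d}"
        using sp_mono prodD st S(3) T(3) by metis
    qed
    finally show ?thesis .
  qed
  have part1: "ax i \<in> sum_part (\<Omega> j) {x. \<xi> x = 0}" for i j
  proof -
    obtain f where f: "finite {x. f x \<noteq> 0}" "\<forall>x. f x \<in> \<Omega> j x" "ax i = sum f {x. f x \<noteq> 0}"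
      using decomp unfolding fusion_decomp_def direct_sum_decomp_def by blast
    define S where "S = {x. f x \<noteq> 0}"
    define a0 where "a0 = sum f (S \<inter> {x. \<xi> x = 0})"
    define a1 where "a1 = sum f (S - {x. \<xi> x = 0})"
    have "sum f S = a0 + a1" unfolding a0_def a1_def by (rule sum.Int_Diff, simp add: S_def f(1))
    then have a: "ax i = a0 + a1" using f(3) unfolding S_def by simp
    have a0: "a0 \<in> sum_part (\<Omega> j) {x. \<xi> x = 0}" unfolding a0_def sum_part_def
      using f S_def by (intro CollectI exI[of _ "S \<inter> {x. \<xi> x = 0}"] exI[of _ f]) auto
    have "S - {x. \<xi> x = 0} \<subseteq> {x. \<xi> x = 1}" by auto
    then have a1: "a1 \<in> sum_part (\<Omega> j) {x. \<xi> x = 1}" unfolding a1_def sum_part_def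
      using f S_def by (intro CollectI exI[of _ "S - {x. \<xi> x = 0}"] exI[of _ f]) auto
    have "ax i = mul (ax i) (ax i)" using idem by metis
    also have "\<dots> = mul a0 a0 + mul a1 a1 + (mul a0 a1 + mul a0 a1)"
    proof -
      have e1: "mul (a0 + a1) (a0 + a1) = mul a0 (a0 + a1) + mul a1 (a0 + a1)" using ladd by blast
      have e2: "mul a0 (a0 + a1) = mul a0 a0 + mul a0 a1" using radd by blast
      have e3: "mul a1 (a0 + a1) = mul a1 a0 + mul a1 a1" using radd by blast
      have "mul (a0 + a1) (a0 + a1) = (mul a0 a0 + mul a0 a1) + (mul a1 a0 + mul a1 a1)"
        unfolding e1 e2 e3 by (rule refl)
      moreover have "mul a1 a0 = mul a0 a1" using comm by metis
      ultimately show ?thesis unfolding a by (simp add: add_ac)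
    qed
    also have "\<dots> = mul a0 a0 + mul a1 a1" by (simp only: twice add_0_right)
    finally have eq: "ax i = mul a0 a0 + mul a1 a1" .
    have "mul a0 a0 \<in> sum_part (\<Omega> j) {x. \<xi> x = 0}" using prod[OF a0 a0] by simp
    moreover have "mul a1 a1 \<in> sum_part (\<Omega> j) {x. \<xi> x = 0}" using prod[OF a1 a1] by simp
    ultimately show ?thesis unfolding eq by (rule sp_add[OF z ad])
  qed
  have part2: "sum_part (\<Omega> i) {x. \<xi> x = 1} = {0}" if gen: "generated_by smul mul (range ax)" for i
  proof -
    let ?B = "sum_part (\<Omega> i) {x. \<xi> x = 0}"
    have "module.subspace smul ?B"
      unfolding module.subspace_def[OF md]
    proof (intro conjI ballI allI)
      show "0 \<in> ?B" by (rule sp_zero)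
      show "x + y \<in> ?B" if "x \<in> ?B" "y \<in> ?B" for x y by (rule sp_add[OF z ad that])
      show "smul c x \<in> ?B" if x: "x \<in> ?B" for c x
      proof -
        obtain S f where S: "finite S" "S \<subseteq> {x. \<xi> x = 0}" "\<forall>y\<in>S. f y \<in> \<Omega> i y" "x = sum f S"
          using x unfolding sum_part_def by blast
        have "smul c x = (\<Sum>y\<in>S. smul c (f y))" using S(4) md by (simp add: module.scale_sum_right)
        moreover have "\<forall>y\<in>S. smul c (f y) \<in> \<Omega> i y" using S(3) module.subspace_scale[OF md sub] by blast
        ultimately show ?thesis unfolding sum_part_def using S
          by (intro CollectI exI[of _ S] exI[of _ "\<lambda>y. smul c (f y)"]) auto
      qed
    qed
    moreover have "\<forall>u\<in>?B. \<forall>v\<in>?B. mul u v \<in> ?B" using prod[of _ i 0 _ 0] by simp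
    ultimately have "subalgebra smul mul ?B" unfolding subalgebra_def by (intro conjI)
    moreover have "range ax \<subseteq> ?B" using part1 by blast
    ultimately have B: "?B = UNIV" using gen unfolding generated_by_def by (elim allE impE)
    show ?thesis
    proof (intro equalityI subsetI)
      fix v assume v1: "v \<in> sum_part (\<Omega> i) {x. \<xi> x = 1}"
      have v0: "v \<in> ?B" using B by simp
      obtain f where f: "finite {x. f x \<noteq> 0}" "\<forall>x. f x \<in> \<Omega> i x" "v = sum f {x. f x \<noteq> 0}" "{x. f x \<noteq> 0} \<subseteq> {x. \<xi> x = 1}"
        using sp_rep[OF v1 z] by blast
      obtain g where g: "finite {x. g x \<noteq> 0}" "\<forall>x. g x \<in> \<Omega> i x" "v = sum g {x. g x \<noteq> 0}" "{x. g x \<noteq> 0} \<subseteq> {x. \<xi> x = 0}"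
        using sp_rep[OF v0 z] by blast
      have uq: "\<exists>!f. finite {x. f x \<noteq> 0} \<and> (\<forall>x. f x \<in> \<Omega> i x) \<and> v = sum f {x. f x \<noteq> 0}"
        using decomp unfolding fusion_decomp_def direct_sum_decomp_def by blast
      have "f = g" using uq f g by blast
      then have "{x. f x \<noteq> 0} = {}" using f(4) g(4) by force
      then show "v \<in> {0}" using f(3) by simp
    next
      fix v assume "v \<in> {0::'a}" then show "v \<in> sum_part (\<Omega> i) {x. \<xi> x = 1}" by (simp add: sp_zero)
    qed
  qed
  show ?thesis using part1 part2 by blast
qed

end
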